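(* Let $B^0=\bigcup_{n\in\mathbb{Z}}\{(n,k):\ k=0,1,\dots,2^{|n|}\}\subset\mathbb{H}$. Then $\bar{\mathcal H}_{B^0}(x)=0$ for all $x\in B^0$.
   Context: $\mathbb{H}=\{(x_1,x_2)\in\mathbb{Z}^2:\ x_2\ge 0\}$ and $L_n=\{(x_1,n):x_1\in\mathbb{Z}\}$. $(S_n)_{n\ge0}$ is a simple random walk on $\mathbb{Z}^2$; $P_z$ denotes its law started at $z$. For $A\subset\mathbb{Z}^2$, $\bar\tau_A=\min\{n\ge0: S_n\in A\}$. For $B\subset\mathbb{H}$, $x\in B$ and $N\ge1$, define $$\bar{\mathcal H}_{B,N}(x)=\sum_{z\in L_N\setminus B}P_z\big(S_{\bar\tau_{B\cup L_0}}=x\big).$$ It is known that the limit $\bar{\mathcal H}_B(x)=\lim_{N\to\infty}\bar{\mathcal H}_{B,N}(x)$ exists and is finite for every $B\subset\mathbb{H}$ and $x\in B$; it is called the stationary harmonic measure of $x$ with respect to $B$. *)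

theory Defs
  imports "HOL-Probability.Probability"
begin

definition srw_step :: "(int \<times> int) pmf" where
  "srw_step = pmf_of_set {(1,0), (-1,0), (0,1), (0,-1)}"

definition srw_space :: "(int \<times> int) stream measure" where
  "srw_space = stream_space (measure_pmf srw_step)"

definition walk :: "int \<times> int \<Rightarrow> (int \<times> int) stream \<Rightarrow> nat \<Rightarrow> int \<times> int" where
  "walk z w n = (fst z + sum_list (map fst (stake n w)), snd z + sum_list (map snd (stake n w)))"

text \<open>P_z(S_{tau_A} = x), tau_A = min{n >= 0. S_n in A} (event requires tau_A finite).\<close>
definition hit_prob :: "(int \<times> int) set \<Rightarrow> int \<times> int \<Rightarrow> int \<times> int \<Rightarrow> ennreal" where
  "hit_prob A z x = emeasure srw_space
     {w \<in> space srw_space. \<exists>n. walk z w n \<in> A \<and> (\<forall>m<n. walk z w m \<notin> A) \<and> walk z w n = x}"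

definition hline :: "int \<Rightarrow> (int \<times> int) set" where
  "hline n = {p. snd p = n}"

text \<open>bar H_{B,N}(x) = sum over z in L_N \ B of P_z(S_{tau_{B u L_0}} = x).\<close>
definition HBN :: "(int \<times> int) set \<Rightarrow> nat \<Rightarrow> int \<times> int \<Rightarrow> ennreal" where
  "HBN B N x = (\<Sum>\<^sub>\<infinity> z \<in> hline (int N) - B. hit_prob (B \<union> hline 0) z x)"

definition B0 :: "(int \<times> int) set" where
  "B0 = {(n, k). 0 \<le> k \<and> k \<le> 2 ^ nat \<bar>n\<bar>}"

end

theory Submission imports Defs "HOL-Real_Asymp.Real_Asymp" begin

definition Dset :: "int \<Rightarrow> int \<Rightarrow> (int \<times> int) set" where
  "Dset h K = {p. p \<notin> B0 \<and> h < snd p \<and> snd p < K}"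
definition Tg :: "int \<Rightarrow> int \<Rightarrow> (int \<times> int) set" where
  "Tg h K = {p. snd p \<le> h \<or> K \<le> snd p}"

fun Ft :: "int \<Rightarrow> int \<Rightarrow> nat \<Rightarrow> int \<times> int \<Rightarrow> (int \<times> int) stream \<Rightarrow> bool" where
  "Ft h K 0 z w = (z \<in> Tg h K)"
| "Ft h K (Suc t) z w = (z \<in> Tg h K \<or> (z \<in> Dset h K \<and>
      Ft h K t (fst z + fst (shd w), snd z + snd (shd w)) (stl w)))"

lemma walk_0[simp]: "walk z w 0 = z" by (simp add: walk_def)
lemma walk_Suc: "walk z w (Suc m) = walk (fst z + fst (shd w), snd z + snd (shd w)) (stl w) m"
  by (simp add: walk_def algebra_simps)

lemma space_srw[simp]: "space srw_space = UNIV"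
  by (simp add: srw_space_def space_stream_space)

lemma Ft_reach: "(\<forall>m<j. walk z w m \<in> Dset h K) \<Longrightarrow> walk z w j \<in> Tg h K \<Longrightarrow> Ft h K j z w"
proof (induction j arbitrary: z w)
  case 0 then show ?case by simp
next
  case (Suc j)
  have "z \<in> Dset h K" using Suc.prems(1)[rule_format, of 0] by simp
  moreover have "Ft h K j (fst z + fst (shd w), snd z + snd (shd w)) (stl w)"
    apply (rule Suc.IH)
    using Suc.prems by (auto simp: walk_Suc[symmetric])
  ultimately show ?case by simp
qed

lemma Ft_mono: "Ft h K t z w \<Longrightarrow> Ft h K (Suc t) z w"
proof (induction t arbitrary: z w)
  case 0 then show ?case by simp
next
  case (Suc t)
  show ?case using Suc.prems Suc.IH[of "(fst z + fst (shd w), snd z + snd (shd w))" "stl w"]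
    by (simp only: Ft.simps) blast
qed

lemma Ft_meas: "Measurable.pred srw_space (Ft h K t z)"
proof (induction t arbitrary: z)
  case 0 then show ?case by simp
next
  case (Suc t)
  have "(\<lambda>w. Ft h K t (fst z + fst (shd w), snd z + snd (shd w)) (stl w)) \<in> measurable srw_space (count_space UNIV)"
  proof (rule measurable_compose_countable[where f="\<lambda>s w. Ft h K t (fst z + fst s, snd z + snd s) (stl w)" and g=shd])
    fix s :: "int \<times> int"
    show "(\<lambda>w. Ft h K t (fst z + fst s, snd z + snd s) (stl w)) \<in> measurable srw_space (count_space UNIV)"
      using Suc.IH[of "(fst z + fst s, snd z + snd s)"] unfolding srw_space_def
      by (intro measurable_compose[OF measurable_stl]) auto
  next
    show "shd \<in> measurable srw_space (count_space UNIV)"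
      unfolding srw_space_def by measurable
  qed
  then show ?case by simp
qed

lemma Ft_sets: "{w \<in> space srw_space. Ft h K t z w} \<in> sets srw_space"
  using Ft_meas[of h K t z] by measurable
lemma Ft_sets': "Collect (Ft h K t z) \<in> sets srw_space"
  using Ft_sets[of h K t z] by simp

definition S4 :: "(int \<times> int) set" where "S4 = {(1,0), (-1,0), (0,1), (0,-1)}"

definition uu :: "int \<Rightarrow> int \<Rightarrow> nat \<Rightarrow> int \<times> int \<Rightarrow> ennreal" where
  "uu h K t z = emeasure srw_space {w \<in> space srw_space. Ft h K t z w}"

lemma uu_step:
  assumes "z \<in> Dset h K" "z \<notin> Tg h K"
  shows "uu h K (Suc t) z = (\<Sum>s\<in>S4. uu h K t (fst z + fst s, snd z + snd s)) / 4"
proof -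
  have meas: "{w \<in> space srw_space. Ft h K (Suc t) z w} \<in> sets srw_space"
    using Ft_meas[of h K "Suc t" z] by measurable
  have "uu h K (Suc t) z = (\<integral>\<^sup>+s. emeasure srw_space {x\<in>space srw_space. s ## x \<in> {w \<in> space srw_space. Ft h K (Suc t) z w}} \<partial>measure_pmf srw_step)"
    unfolding uu_def using prob_space.emeasure_stream_space[OF prob_space_measure_pmf, of "{w \<in> space srw_space. Ft h K (Suc t) z w}" srw_step] meas
    by (simp add: srw_space_def)
  also have "\<dots> = (\<integral>\<^sup>+s. uu h K t (fst z + fst s, snd z + snd s) \<partial>measure_pmf srw_step)"
    using assms by (simp add: uu_def)
  also have "\<dots> = (\<Sum>s\<in>S4. uu h K t (fst z + fst s, snd z + snd s)) / card S4"
    unfolding srw_step_def S4_def[symmetric]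
    by (rule nn_integral_pmf_of_set) (auto simp: S4_def)
  also have "card S4 = 4" by (simp add: S4_def)
  finally show ?thesis by simp
qed

lemma uu_bound:
  fixes G :: "int \<times> int \<Rightarrow> ennreal"
  assumes G1: "\<And>z. z \<in> Tg h K \<Longrightarrow> 1 \<le> G z"
  and G2: "\<And>z. z \<in> Dset h K \<Longrightarrow> z \<notin> Tg h K \<Longrightarrow> (\<Sum>s\<in>S4. G (fst z + fst s, snd z + snd s)) / 4 \<le> G z"
  shows "uu h K t z \<le> G z"
proof (induction t arbitrary: z)
  case 0
  show ?case
  proof (cases "z \<in> Tg h K")
    case True
    have "uu h K 0 z \<le> 1" unfolding uu_def srw_space_def
      by (rule prob_space.emeasure_le_1[OF prob_space.prob_space_stream_space[OF prob_space_measure_pmf]])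
    then show ?thesis using G1[OF True] by (rule order_trans)
  next
    case False then show ?thesis by (simp add: uu_def)
  qed
next
  case (Suc t)
  show ?case
  proof (cases "z \<in> Tg h K")
    case True
    have "uu h K (Suc t) z \<le> 1" unfolding uu_def srw_space_def
      by (rule prob_space.emeasure_le_1[OF prob_space.prob_space_stream_space[OF prob_space_measure_pmf]])
    then show ?thesis using G1[OF True] by (rule order_trans)
  next
    case False
    show ?thesis
    proof (cases "z \<in> Dset h K")
      case True
      have "uu h K (Suc t) z = (\<Sum>s\<in>S4. uu h K t (fst z + fst s, snd z + snd s)) / 4"
        using uu_step[OF True False] .
      also have "\<dots> \<le> (\<Sum>s\<in>S4. G (fst z + fst s, snd z + snd s)) / 4"
        by (intro divide_right_mono_ennreal sum_mono Suc.IH)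
      also have "\<dots> \<le> G z" using G2[OF True False] .
      finally show ?thesis .
    next
      case False2: False
      then show ?thesis using False by (simp add: uu_def)
    qed
  qed
qed

lemma hit_bound:
  fixes G :: "int \<times> int \<Rightarrow> ennreal"
  assumes G1: "\<And>z. z \<in> Tg h K \<Longrightarrow> 1 \<le> G z"
  and G2: "\<And>z. z \<in> Dset h K \<Longrightarrow> z \<notin> Tg h K \<Longrightarrow> (\<Sum>s\<in>S4. G (fst z + fst s, snd z + snd s)) / 4 \<le> G z"
  and x: "x \<in> B0" "snd x \<le> h"
  shows "hit_prob (B0 \<union> hline 0) z x \<le> G z"
proof -
  let ?E = "{w \<in> space srw_space. \<exists>n. walk z w n \<in> B0 \<union> hline 0 \<and> (\<forall>m<n. walk z w m \<notin> B0 \<union> hline 0) \<and> walk z w n = x}"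
  let ?F = "\<lambda>t. {w \<in> space srw_space. Ft h K t z w}"
  have sub: "?E \<subseteq> (\<Union>t. ?F t)"
  proof
    fix w assume "w \<in> ?E"
    then obtain n where n: "\<forall>m<n. walk z w m \<notin> B0 \<union> hline 0" "walk z w n = x" by auto
    have ex: "\<exists>j. walk z w j \<notin> Dset h K" using n(2) x by (intro exI[of _ n]) (auto simp: Dset_def)
    define j where "j = (LEAST j. walk z w j \<notin> Dset h K)"
    have j1: "walk z w j \<notin> Dset h K" unfolding j_def using ex by (rule LeastI_ex)
    have j2: "\<forall>m<j. walk z w m \<in> Dset h K" unfolding j_def using not_less_Least by blast
    have jn: "j \<le> n" unfolding j_def using n(2) x by (intro Least_le) (auto simp: Dset_def)
    have "walk z w j \<in> Tg h K"
    proof (cases "j = n")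
      case True then show ?thesis using n(2) x by (auto simp: Tg_def)
    next
      case False
      then have "walk z w j \<notin> B0" using n(1) jn by auto
      then show ?thesis using j1 by (auto simp: Dset_def Tg_def)
    qed
    then have "Ft h K j z w" using Ft_reach j2 by blast
    then show "w \<in> (\<Union>t. ?F t)" by auto
  qed
  have "hit_prob (B0 \<union> hline 0) z x \<le> emeasure srw_space (\<Union>t. ?F t)"
    unfolding hit_prob_def
    by (rule emeasure_mono[OF sub]) (auto intro!: sets.countable_UN simp: Ft_sets')
  also have "\<dots> = (SUP t. uu h K t z)"
    unfolding uu_def
    apply (rule SUP_emeasure_incseq[symmetric])
    by (auto simp: incseq_Suc_iff Ft_sets' intro: Ft_mono)
  also have "\<dots> \<le> G z" by (intro SUP_least uu_bound[OF G1 G2])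
  finally show ?thesis .
qed


definition qq :: "real \<Rightarrow> real" where "qq A = A / (A + 1)"
definition psi :: "int \<Rightarrow> int \<Rightarrow> real \<Rightarrow> int \<Rightarrow> real" where
  "psi h K A k = qq A powr real_of_int (k - h) + qq A powr real_of_int (K - k)"
definition ff :: "int \<Rightarrow> int \<Rightarrow> real \<Rightarrow> int \<times> int \<Rightarrow> real" where
  "ff h K A p = psi h K A (snd p) * (A - (real_of_int (fst p))^2)"

lemma qq_pos: "0 < A \<Longrightarrow> 0 < qq A" by (simp add: qq_def)
lemma qq_le1: "0 < A \<Longrightarrow> qq A \<le> 1" by (simp add: qq_def)
lemma psi_pos: "0 < A \<Longrightarrow> 0 < psi h K A k"
proof -
  assume A: "0 < A"
  then have "qq A \<noteq> 0" using qq_pos[OF A] by simp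
  then show ?thesis unfolding psi_def by (intro add_pos_pos) auto
qed

lemma psi_Suc: "0 < A \<Longrightarrow> psi h K A (k+1) + psi h K A (k-1) = (qq A + 1 / qq A) * psi h K A k"
proof -
  assume A: "0 < A"
  let ?q = "qq A"
  have q: "0 < ?q" using qq_pos[OF A] .
  have e1: "?q powr real_of_int (k + 1 - h) = ?q * ?q powr real_of_int (k - h)"
  proof -
    have "real_of_int (k + 1 - h) = real_of_int (k - h) + 1" by simp
    then show ?thesis using q by (simp only: powr_add) simp
  qed
  have e2: "?q powr real_of_int (k - 1 - h) = ?q powr real_of_int (k - h) / ?q"
  proof -
    have "real_of_int (k - 1 - h) = real_of_int (k - h) - 1" by simp
    then show ?thesis using q by (simp only: powr_diff) simp
  qed
  have e3: "?q powr real_of_int (K - (k + 1)) = ?q powr real_of_int (K - k) / ?q"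
  proof -
    have "real_of_int (K - (k + 1)) = real_of_int (K - k) - 1" by simp
    then show ?thesis using q by (simp only: powr_diff) simp
  qed
  have e4: "?q powr real_of_int (K - (k - 1)) = ?q * ?q powr real_of_int (K - k)"
  proof -
    have "real_of_int (K - (k - 1)) = real_of_int (K - k) + 1" by simp
    then show ?thesis using q by (simp only: powr_add) simp
  qed
  show ?thesis unfolding psi_def e1 e2 e3 e4 using q
    by (simp add: field_simps)
qed

lemma qq_ineq: "0 < A \<Longrightarrow> qq A + 1 / qq A - 2 = 1 / (A * (A + 1))"
proof -
  assume A: "0 < A"
  then have "A \<noteq> 0" "A + 1 \<noteq> 0" "A + A * A \<noteq> 0" by (auto, smt (verit) mult_pos_pos)
  then show ?thesis unfolding qq_def by (simp add: field_simps)
qed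

lemma superharm:
  assumes A: "0 < A" and n: "(real_of_int n)^2 \<le> A"
  shows "ff h K A (n+1,k) + ff h K A (n-1,k) + ff h K A (n,k+1) + ff h K A (n,k-1) \<le> 4 * ff h K A (n,k)"
proof -
  let ?p = "psi h K A k" and ?c = "A - (real_of_int n)^2"
  have p: "0 < ?p" using psi_pos[OF A] .
  have lhs: "ff h K A (n+1,k) + ff h K A (n-1,k) + ff h K A (n,k+1) + ff h K A (n,k-1)
      = ?p * (2 * ?c - 2) + ?c * (qq A + 1 / qq A) * ?p"
  proof -
    have "ff h K A (n,k+1) + ff h K A (n,k-1) = (psi h K A (k+1) + psi h K A (k-1)) * ?c"
      unfolding ff_def by (simp add: algebra_simps)
    also have "\<dots> = ?c * (qq A + 1 / qq A) * ?p" using psi_Suc[OF A, of h K k] by simp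
    finally have 1: "ff h K A (n,k+1) + ff h K A (n,k-1) = ?c * (qq A + 1 / qq A) * ?p" .
    have 2: "ff h K A (n+1,k) + ff h K A (n-1,k) = ?p * (2 * ?c - 2)"
      unfolding ff_def by (simp add: algebra_simps power2_eq_square)
    show ?thesis using 1 2 by simp
  qed
  have c: "0 \<le> ?c" "?c \<le> A" using n by auto
  have "?c * (qq A + 1 / qq A - 2) \<le> A * (1 / (A * (A+1)))"
    unfolding qq_ineq[OF A] using c A by (intro mult_mono) auto
  also have "\<dots> \<le> 2" using A by (simp add: field_simps add_pos_pos)
  finally have key: "?c * (qq A + 1 / qq A - 2) \<le> 2" .
  have "?p * (2 * ?c - 2) + ?c * (qq A + 1 / qq A) * ?p = ?p * (4 * ?c) + ?p * (?c * (qq A + 1 / qq A - 2) - 2)"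
    by (simp add: algebra_simps)
  also have "\<dots> \<le> ?p * (4 * ?c)"
    using key p by (simp add: mult_nonpos_nonneg mult_le_0_iff)
  finally show ?thesis using lhs by (simp add: ff_def algebra_simps)
qed

definition GG :: "int \<Rightarrow> int \<Rightarrow> real \<Rightarrow> int \<times> int \<Rightarrow> ennreal" where
  "GG h K A p = (if p \<in> Tg h K then 1 else if p \<in> Dset h K then ennreal (ff h K A p) else 0)"

lemma psi_ge1_h: "0 < A \<Longrightarrow> 1 \<le> psi h K A h"
  unfolding psi_def using qq_pos[of A] by simp
lemma psi_ge1_K: "0 < A \<Longrightarrow> 1 \<le> psi h K A K"
  unfolding psi_def using qq_pos[of A] by simp

lemma nbr_ff:
  assumes A: "0 < A" and HA: "\<And>p. p \<in> Dset h K \<Longrightarrow> (real_of_int \<bar>fst p\<bar> + 1)^2 + 1 \<le> A"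
  and z: "z \<in> Dset h K" and d: "\<bar>dn\<bar> + \<bar>dk\<bar> \<le> 1"
  shows "0 \<le> ff h K A (fst z + dn, snd z + dk) \<and> GG h K A (fst z + dn, snd z + dk) \<le> ennreal (ff h K A (fst z + dn, snd z + dk))"
proof -
  let ?p = "(fst z + dn, snd z + dk)"
  have "\<bar>fst z + dn\<bar> \<le> \<bar>fst z\<bar> + 1" using d by auto
  then have "real_of_int \<bar>fst z + dn\<bar> \<le> real_of_int \<bar>fst z\<bar> + 1" by linarith
  then have "(real_of_int \<bar>fst z + dn\<bar>)^2 \<le> (real_of_int \<bar>fst z\<bar> + 1)^2"
    by (intro power_mono) auto
  then have c: "1 \<le> A - (real_of_int (fst z + dn))^2" using HA[OF z] by simp
  have ps: "0 < psi h K A (snd z + dk)" using psi_pos[OF A] .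
  have nn: "0 \<le> ff h K A ?p" unfolding ff_def using c ps by simp
  moreover have "GG h K A ?p \<le> ennreal (ff h K A ?p)"
  proof (cases "?p \<in> Tg h K")
    case True
    have "snd z + dk = h \<or> snd z + dk = K" using True z d by (auto simp: Tg_def Dset_def)
    then have "1 \<le> psi h K A (snd z + dk)" using psi_ge1_h[OF A] psi_ge1_K[OF A] by auto
    then have "1 * 1 \<le> ff h K A ?p" unfolding ff_def using c by (intro mult_mono) auto
    then show ?thesis using True by (simp add: GG_def)
  next
    case False then show ?thesis by (simp add: GG_def)
  qed
  ultimately show ?thesis by simp
qed

lemma GG_G2:
  assumes A: "0 < A" and HA: "\<And>p. p \<in> Dset h K \<Longrightarrow> (real_of_int \<bar>fst p\<bar> + 1)^2 + 1 \<le> A"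
  and z: "z \<in> Dset h K" and zT: "z \<notin> Tg h K"
  shows "(\<Sum>s\<in>S4. GG h K A (fst z + fst s, snd z + snd s)) / 4 \<le> GG h K A z"
proof -
  obtain n k where zz: "z = (n, k)" by (cases z)
  have n2: "(real_of_int n)^2 \<le> A"
  proof -
    have "(real_of_int \<bar>n\<bar>)^2 \<le> (real_of_int \<bar>n\<bar> + 1)^2" by (intro power_mono) auto
    then show ?thesis using HA[OF z] zz by simp
  qed
  note N1 = nbr_ff[OF A HA z, of 1 0] and N2 = nbr_ff[OF A HA z, of "-1" 0]
   and N3 = nbr_ff[OF A HA z, of 0 1] and N4 = nbr_ff[OF A HA z, of 0 "-1"]
  have "(\<Sum>s\<in>S4. GG h K A (fst z + fst s, snd z + snd s)) =
      GG h K A (n+1,k) + GG h K A (n-1,k) + GG h K A (n,k+1) + GG h K A (n,k-1)"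
    by (simp add: S4_def zz add_ac)
  also have "\<dots> \<le> ennreal (ff h K A (n+1,k)) + ennreal (ff h K A (n-1,k)) + ennreal (ff h K A (n,k+1)) + ennreal (ff h K A (n,k-1))"
    using N1 N2 N3 N4 zz by (intro add_mono) auto
  also have "\<dots> = ennreal (ff h K A (n+1,k) + ff h K A (n-1,k) + ff h K A (n,k+1) + ff h K A (n,k-1))"
    using N1 N2 N3 N4 zz by (simp add: ennreal_plus)
  finally have s1: "(\<Sum>s\<in>S4. GG h K A (fst z + fst s, snd z + snd s)) / 4 \<le>
      ennreal (ff h K A (n+1,k) + ff h K A (n-1,k) + ff h K A (n,k+1) + ff h K A (n,k-1)) / ennreal 4"
    by (simp add: divide_right_mono_ennreal)
  also have "\<dots> = ennreal ((ff h K A (n+1,k) + ff h K A (n-1,k) + ff h K A (n,k+1) + ff h K A (n,k-1)) / 4)"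
    using N1 N2 N3 N4 zz by (intro divide_ennreal) auto
  also have "\<dots> \<le> ennreal (ff h K A (n,k))"
    using superharm[OF A n2, of h K k] by (intro ennreal_leI) simp
  also have "\<dots> = GG h K A z" using z zT zz by (simp add: GG_def)
  finally show ?thesis .
qed


lemma qq_powr_le:
  assumes A: "0 < A" and t: "0 \<le> t"
  shows "qq A powr t \<le> exp (- t / (A + 1))"
proof -
  have q: "0 < qq A" using qq_pos[OF A] .
  have "ln (qq A) \<le> qq A - 1" using ln_le_minus_one[OF q] .
  also have "qq A - 1 = - 1 / (A + 1)" using A by (simp add: qq_def field_simps)
  finally have "t * ln (qq A) \<le> t * (- 1 / (A + 1))" using t by (intro mult_left_mono) auto
  then show ?thesis using q by (simp add: powr_def)
qed

lemma term_bound: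
  fixes N :: nat and b :: int
  assumes b: "0 \<le> b" "b < int N" and x: "x \<in> B0" "snd x = b"
  and z: "z \<in> hline (int N) - B0"
  defines "A \<equiv> (log 2 (2 * real N) + 2)^2"
  shows "hit_prob (B0 \<union> hline 0) z x \<le> ennreal (2 * A * exp (- (real N - b) / (A + 1)))"
proof -
  define h where "h = b"
  define K where "K = 2 * int N"
  have N1: "1 \<le> N" using b by linarith
  have L0: "0 \<le> log 2 (2 * real N)" using N1 by simp
  have Apos: "0 < A" unfolding A_def using L0 by (intro zero_less_power) linarith
  have HA: "(real_of_int \<bar>fst p\<bar> + 1)^2 + 1 \<le> A" if p: "p \<in> Dset h K" for p
  proof -
    obtain n k where pp: "p = (n, k)" by (cases p)
    have k: "h < k" "k < K" "p \<notin> B0" using p pp by (auto simp: Dset_def)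
    then have "\<not> k \<le> 2 ^ nat \<bar>n\<bar>" using pp b unfolding B0_def h_def by auto
    then have "(2::int) ^ nat \<bar>n\<bar> < 2 * int N" using k K_def by linarith
    then have "real_of_int ((2::int) ^ nat \<bar>n\<bar>) < real_of_int (2 * int N)" by linarith
    then have "2 powr (real_of_int \<bar>n\<bar>) < 2 * real N"
      by (simp add: powr_realpow[symmetric])
    then have lt: "real_of_int \<bar>n\<bar> < log 2 (2 * real N)"
      using N1 by (subst less_log_iff) auto
    have "(real_of_int \<bar>n\<bar> + 1)^2 \<le> (log 2 (2 * real N) + 1)^2"
      using lt by (intro power_mono) auto
    then show ?thesis unfolding A_def pp using L0 by (simp add: power2_eq_square algebra_simps)
  qed
  obtain n where zz: "z = (n, int N)" using z by (cases z) (auto simp: hline_def)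
  have zD: "z \<in> Dset h K" using z zz b unfolding Dset_def h_def K_def by auto
  have zT: "z \<notin> Tg h K" using zz b unfolding Tg_def h_def K_def by auto
  have "hit_prob (B0 \<union> hline 0) z x \<le> GG h K A z"
  proof (rule hit_bound)
    show "\<And>z. z \<in> Tg h K \<Longrightarrow> 1 \<le> GG h K A z" by (simp add: GG_def)
    show "\<And>z. z \<in> Dset h K \<Longrightarrow> z \<notin> Tg h K \<Longrightarrow> (\<Sum>s\<in>S4. GG h K A (fst z + fst s, snd z + snd s)) / 4 \<le> GG h K A z"
      using GG_G2[OF Apos HA] by blast
    show "x \<in> B0" "snd x \<le> h" using x h_def by auto
  qed
  also have "GG h K A z = ennreal (ff h K A z)" using zD zT by (simp add: GG_def)
  also have "ff h K A z \<le> 2 * A * exp (- (real N - b) / (A + 1))"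
  proof -
    have "(real_of_int n)^2 = (real_of_int \<bar>n\<bar>)^2" by simp
    also have "\<dots> \<le> (real_of_int \<bar>n\<bar> + 1)^2" by (intro power_mono) auto
    finally have sq: "(real_of_int n)^2 \<le> (real_of_int \<bar>n\<bar> + 1)^2" .
    have c: "0 \<le> A - (real_of_int n)^2" "A - (real_of_int n)^2 \<le> A"
      using HA[OF zD] zz sq by auto
    have e: "exp (- (real N - b) / (A + 1)) \<ge> 0" by simp
    have p1: "qq A powr real_of_int (int N - h) \<le> exp (- (real N - b) / (A + 1))"
      using qq_powr_le[OF Apos, of "real_of_int (int N - h)"] b h_def by simp
    have p2: "qq A powr real_of_int (K - int N) \<le> qq A powr real_of_int (int N - h)"
      using b qq_pos[OF Apos] qq_le1[OF Apos] h_def K_def by (intro powr_mono') auto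
    have ps: "psi h K A (int N) \<le> 2 * exp (- (real N - b) / (A + 1))"
      unfolding psi_def using p1 p2 by linarith
    have "ff h K A z = psi h K A (int N) * (A - (real_of_int n)^2)" by (simp add: ff_def zz)
    also have "\<dots> \<le> (2 * exp (- (real N - b) / (A + 1))) * A"
      using ps c psi_pos[OF Apos] by (intro mult_mono) auto
    finally show ?thesis by (simp add: algebra_simps)
  qed
  then have "ennreal (ff h K A z) \<le> ennreal (2 * A * exp (- (real N - b) / (A + 1)))"
    by (rule ennreal_leI)
  finally show ?thesis .
qed


lemma real_lim:
  "((\<lambda>y::real. (2*y+1)*(2*((log 2 (2*y) + 2)^2) * exp (- (y - c) / ((log 2 (2*y) + 2)^2+1)))) \<longlongrightarrow> 0) at_top"
  by real_asymp

lemma card_Z: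
  fixes N :: nat
  shows "finite (hline (int N) - B0) \<and> card (hline (int N) - B0) \<le> 2 * N + 1"
proof -
  have sub: "hline (int N) - B0 \<subseteq> (\<lambda>n. (n, int N)) ` {- int N..int N}"
  proof
    fix z assume z: "z \<in> hline (int N) - B0"
    obtain n where zz: "z = (n, int N)" using z by (cases z) (auto simp: hline_def)
    have h1: "(2::int) ^ nat \<bar>n\<bar> < int N" using z zz by (auto simp: B0_def)
    have "int (nat \<bar>n\<bar>) < 2 ^ nat \<bar>n\<bar>"
      using less_exp[of "nat \<bar>n\<bar>"] by (metis of_nat_less_iff of_nat_numeral of_nat_power)
    then have h2: "\<bar>n\<bar> < (2::int) ^ nat \<bar>n\<bar>" by simp
    have "\<bar>n\<bar> < int N" using less_trans[OF h2 h1] .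
    then show "z \<in> (\<lambda>n. (n, int N)) ` {- int N..int N}" using zz by (intro image_eqI[where x=n]) auto
  qed
  have fin: "finite ((\<lambda>n. (n, int N)) ` {- int N..int N})" by simp
  have "card (hline (int N) - B0) \<le> card ((\<lambda>n. (n, int N)) ` {- int N..int N})"
    by (rule card_mono[OF fin sub])
  also have "\<dots> \<le> card {- int N..int N}" by (rule card_image_le) simp
  also have "\<dots> = 2 * N + 1" by simp
  finally show ?thesis using finite_subset[OF sub fin] by simp
qed

theorem mainTheorem2:
  assumes "x \<in> B0"
  shows "((\<lambda>N. HBN B0 N x) \<longlongrightarrow> 0) sequentially"
proof -
  obtain a b where xx: "x = (a, b)" by (cases x)
  have b0: "0 \<le> b" using assms xx by (auto simp: B0_def)
  define A where "A N = (log 2 (2 * real N) + 2)^2" for N :: nat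
  define g where "g N = (2 * real N + 1) * (2 * A N * exp (- (real N - b) / (A N + 1)))" for N :: nat
  have e: "g = (\<lambda>N. (2 * real N + 1) * (2 * (log 2 (2 * real N) + 2)^2 * exp (- (real N - real_of_int b) / ((log 2 (2 * real N) + 2)^2 + 1))))"
    by (simp add: g_def A_def fun_eq_iff)
  have glim: "g \<longlonglongrightarrow> 0"
    unfolding e by (rule filterlim_compose[OF real_lim filterlim_real_sequentially])
  have ev: "eventually (\<lambda>N. HBN B0 N x \<le> ennreal (g N)) sequentially"
  proof (rule eventually_sequentiallyI[of "Suc (nat b)"])
    fix N assume N: "Suc (nat b) \<le> N"
    then have bN: "b < int N" using b0 by linarith
    have fin: "finite (hline (int N) - B0)" and cd: "card (hline (int N) - B0) \<le> 2 * N + 1"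
      using card_Z[of N] by auto
    let ?c = "2 * A N * exp (- (real N - b) / (A N + 1))"
    have cpos: "0 \<le> ?c" by (simp add: A_def)
    have "HBN B0 N x = (\<Sum>z \<in> hline (int N) - B0. hit_prob (B0 \<union> hline 0) z x)"
      unfolding HBN_def using fin by simp
    also have "\<dots> \<le> (\<Sum>z \<in> hline (int N) - B0. ennreal ?c)"
    proof (intro sum_mono)
      fix z assume z: "z \<in> hline (int N) - B0"
      show "hit_prob (B0 \<union> hline 0) z x \<le> ennreal ?c"
        using term_bound[OF b0 bN assms _ z] xx unfolding A_def by simp
    qed
    also have "\<dots> = ennreal (real (card (hline (int N) - B0)) * ?c)"
      using cpos by (simp add: ennreal_mult' ennreal_of_nat_eq_real_of_nat)
    also have "\<dots> \<le> ennreal (g N)"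
    proof -
      have "real (card (hline (int N) - B0)) \<le> real (2 * N + 1)" using cd by (simp only: of_nat_le_iff)
      then have "real (card (hline (int N) - B0)) \<le> 2 * real N + 1" by simp
      then show ?thesis unfolding g_def using cpos by (intro ennreal_leI mult_right_mono) auto
    qed
    finally show "HBN B0 N x \<le> ennreal (g N)" .
  qed
  have lim: "(\<lambda>N. ennreal (g N)) \<longlonglongrightarrow> ennreal 0"
    using glim by (rule tendsto_ennrealI)
  show ?thesis
    by (rule tendsto_sandwich[of "\<lambda>_. 0" _ _ "\<lambda>N. ennreal (g N)"]) (use ev lim in auto)
qed

end
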